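(* Let $m\ge 2$. For $i=1,\dots,m$ let $p_i(z)=\sum_{j\ge1}p_{i,j}z^j$ be a power series with nonnegative real coefficients, zero constant term and radius of convergence $R_i>0$. For $n\ge0$ let $$D_n=\sum_{(c_1,\dots,c_m)}\ \prod_{i=1}^m\ \prod_{\ell=1}^{k} p_{i,c_{i,\ell}},$$ where the sum ranges over all $m$-tuples $(c_1,\dots,c_m)$ such that, for some common $k\ge0$, each $c_i=(c_{i,1},\dots,c_{i,k})$ is a composition of $n$ with exactly $k$ parts (a $k$-tuple of positive integers summing to $n$; for $n=0$ only the empty composition with $k=0$ is allowed, contributing $1$). (When all $p_{i,j}\in\{0,1\}$, $D_n$ is the number of $m$-tuples of compositions of $n$, the $i$-th one having all its parts in $\mathcal P_i=\{j: p_{i,j}=1\}$, all having the same number of parts.) Let $D(z)=\sum_{n\ge0}D_nz^n$. Fix radii $r_2,\dots,r_m>0$ with $1/r_i<R_i$ for $i=2,\dots,m$. Then there is $\delta>0$ such that for all complex $z$ with $|z|<\delta$ the series $D(z)$ converges and $$D(z)=\frac{1}{(2i\pi)^{m-1}}\oint\cdots\oint \frac{1}{1-p_1(z\,t_2\cdots t_m)\,p_2(1/t_2)\cdots p_m(1/t_m)}\,\frac{dt_2}{t_2}\cdots\frac{dt_m}{t_m},$$ where each $t_j$ runs counterclockwise over the circle $|t_j|=r_j$. *)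

theory Defs
  imports "HOL-Complex_Analysis.Complex_Analysis"
begin

definition compositions :: "nat \<Rightarrow> nat \<Rightarrow> nat list set" where
  "compositions n k = {cs. length cs = k \<and> (\<forall>x\<in>set cs. 0 < x) \<and> sum_list cs = n}"

text \<open>m-tuples (c_1,...,c_m) of compositions of n all having a common number k of parts,
  encoded as lists of length m (index 0 corresponds to c_1).\<close>
definition comp_tuples :: "nat \<Rightarrow> nat \<Rightarrow> nat list list set" where
  "comp_tuples m n = {cs. length cs = m \<and> (\<exists>k. \<forall>c\<in>set cs. c \<in> compositions n k)}"

text \<open>D_n for coefficient family p (p i j = p_{i+1,j}).\<close>
definition Dcoeff :: "nat \<Rightarrow> (nat \<Rightarrow> nat \<Rightarrow> real) \<Rightarrow> nat \<Rightarrow> real" where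
  "Dcoeff m p n = (\<Sum>cs\<in>comp_tuples m n. \<Prod>i<m. \<Prod>l<length (cs ! i). p i (cs ! i ! l))"

definition pser :: "(nat \<Rightarrow> real) \<Rightarrow> complex \<Rightarrow> complex" where
  "pser a w = (\<Sum>j. complex_of_real (a j) * w ^ j)"

primrec iter_circle_integral :: "real list \<Rightarrow> (complex list \<Rightarrow> complex) \<Rightarrow> complex" where
  "iter_circle_integral [] F = F []"
| "iter_circle_integral (r # rs) F =
     contour_integral (circlepath 0 r) (\<lambda>t. iter_circle_integral rs (\<lambda>ts. F (t # ts)))"

end

theory Submission
  imports Defs
begin


definition torus :: "real list \<Rightarrow> complex list set" where
  "torus rs = {ts. length ts = length rs \<and> (\<forall>j<length rs. cmod (ts!j) = rs!j)}"

lemma Nil_in_torus: "[] \<in> torus []" by (simp add: torus_def)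

lemma Cons_in_torus: "t#ts \<in> torus (r#rs) \<longleftrightarrow> cmod t = r \<and> ts \<in> torus rs"
  by (auto simp: torus_def All_less_Suc2)

primrec good :: "real list \<Rightarrow> (complex list \<Rightarrow> complex) \<Rightarrow> bool" where
  "good [] F = True"
| "good (r#rs) F = (continuous_on (sphere 0 r) (\<lambda>t. iter_circle_integral rs (\<lambda>ts. F (t#ts)))
      \<and> (\<forall>t\<in>sphere 0 r. good rs (\<lambda>ts. F (t#ts))))"

lemma path_image_circ: "r > 0 \<Longrightarrow> path_image (circlepath 0 r) = sphere 0 r"
  by (simp add: path_image_circlepath)

lemma iter_bound:
  assumes "\<forall>r\<in>set rs. r > 0" "B \<ge> 0" "\<And>ts. ts \<in> torus rs \<Longrightarrow> cmod (F ts) \<le> B"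
  shows "cmod (iter_circle_integral rs F) \<le> (\<Prod>r\<leftarrow>rs. 2*pi*r) * B"
  using assms
proof (induction rs arbitrary: F)
  case Nil thus ?case using Nil_in_torus by simp
next
  case (Cons r rs)
  let ?g = "\<lambda>t. iter_circle_integral rs (\<lambda>ts. F (t#ts))"
  have hb: "cmod (?g t) \<le> (\<Prod>r\<leftarrow>rs. 2*pi*r) * B" if "cmod t = r" for t
    using Cons.IH[of "\<lambda>ts. F (t#ts)"] Cons.prems that by (auto simp: Cons_in_torus)
  have K: "(\<Prod>r\<leftarrow>rs. 2*pi*r) \<ge> 0" proof (intro prod_list_nonneg)
    fix x assume "x \<in> set (map (\<lambda>r. 2*pi*r) rs)"
    then obtain y where "y \<in> set rs" "x = 2*pi*y" by auto
    thus "0 \<le> x" using Cons.prems by auto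
  qed
  show ?case
  proof (cases "?g contour_integrable_on circlepath 0 r")
    case True
    then have "cmod (contour_integral (circlepath 0 r) ?g) \<le> ((\<Prod>r\<leftarrow>rs. 2*pi*r) * B) * (2*pi*r)"
      by (intro has_contour_integral_bound_circlepath[OF has_contour_integral_integral])
         (use hb K Cons.prems in auto)
    thus ?thesis by (simp add: algebra_simps)
  next
    case False thus ?thesis using not_integrable_contour_integral[OF False] K Cons.prems
      by (auto intro!: mult_nonneg_nonneg)
  qed
qed

lemma iter_zero: "good rs (\<lambda>_. 0) \<and> iter_circle_integral rs (\<lambda>_. 0) = 0"
  by (induction rs) auto

lemma iter_add:
  assumes "\<forall>r\<in>set rs. r > 0" "good rs F" "good rs G"
  shows "good rs (\<lambda>ts. F ts + G ts) \<and>
    iter_circle_integral rs (\<lambda>ts. F ts + G ts) = iter_circle_integral rs F + iter_circle_integral rs G"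
  using assms
proof (induction rs arbitrary: F G)
  case Nil then show ?case by simp
next
  case (Cons r rs)
  have r: "r > 0" and pos: "\<forall>r\<in>set rs. r > 0" using Cons.prems by auto
  have cF: "continuous_on (sphere 0 r) (\<lambda>t. iter_circle_integral rs (\<lambda>ts. F (t#ts)))"
   and gF: "\<forall>t\<in>sphere 0 r. good rs (\<lambda>ts. F (t#ts))"
   and cG: "continuous_on (sphere 0 r) (\<lambda>t. iter_circle_integral rs (\<lambda>ts. G (t#ts)))"
   and gG: "\<forall>t\<in>sphere 0 r. good rs (\<lambda>ts. G (t#ts))" using Cons.prems by auto
  have eq: "\<And>t. t\<in>sphere 0 r \<Longrightarrow> iter_circle_integral rs (\<lambda>ts. F (t#ts) + G (t#ts))
      = iter_circle_integral rs (\<lambda>ts. F (t#ts)) + iter_circle_integral rs (\<lambda>ts. G (t#ts))"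
   and gd: "\<And>t. t\<in>sphere 0 r \<Longrightarrow> good rs (\<lambda>ts. F (t#ts) + G (t#ts))"
    using Cons.IH[OF pos] gF gG by auto
  have cont: "continuous_on (sphere 0 r) (\<lambda>t. iter_circle_integral rs (\<lambda>ts. F (t#ts) + G (t#ts)))"
    using continuous_on_add[OF cF cG] continuous_on_cong eq by (smt (verit))
  have iF: "(\<lambda>t. iter_circle_integral rs (\<lambda>ts. F (t#ts))) contour_integrable_on circlepath 0 r"
   and iG: "(\<lambda>t. iter_circle_integral rs (\<lambda>ts. G (t#ts))) contour_integrable_on circlepath 0 r"
    using cF cG r by (auto intro!: contour_integrable_continuous_circlepath simp: path_image_circ)
  have "iter_circle_integral (r#rs) (\<lambda>ts. F ts + G ts) =
     contour_integral (circlepath 0 r) (\<lambda>t. iter_circle_integral rs (\<lambda>ts. F (t#ts)) + iter_circle_integral rs (\<lambda>ts. G (t#ts)))"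
    using eq r by (auto intro!: contour_integral_cong simp: path_image_circ)
  also have "\<dots> = iter_circle_integral (r#rs) F + iter_circle_integral (r#rs) G"
    using contour_integral_add[OF iF iG] by simp
  finally show ?case using cont gd by simp
qed

lemma iter_scale:
  assumes "\<forall>r\<in>set rs. r > 0" "good rs F"
  shows "good rs (\<lambda>ts. c * F ts) \<and>
    iter_circle_integral rs (\<lambda>ts. c * F ts) = c * iter_circle_integral rs F"
  using assms
proof (induction rs arbitrary: F)
  case Nil then show ?case by simp
next
  case (Cons r rs)
  have r: "r > 0" and pos: "\<forall>r\<in>set rs. r > 0" using Cons.prems by auto
  have cF: "continuous_on (sphere 0 r) (\<lambda>t. iter_circle_integral rs (\<lambda>ts. F (t#ts)))"
   and gF: "\<forall>t\<in>sphere 0 r. good rs (\<lambda>ts. F (t#ts))" using Cons.prems by auto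
  have eq: "\<And>t. t\<in>sphere 0 r \<Longrightarrow> iter_circle_integral rs (\<lambda>ts. c * F (t#ts))
      = c * iter_circle_integral rs (\<lambda>ts. F (t#ts))"
   and gd: "\<And>t. t\<in>sphere 0 r \<Longrightarrow> good rs (\<lambda>ts. c * F (t#ts))"
    using Cons.IH[OF pos] gF by auto
  have cont: "continuous_on (sphere 0 r) (\<lambda>t. iter_circle_integral rs (\<lambda>ts. c * F (t#ts)))"
    using continuous_on_mult_left[OF cF, of c] continuous_on_cong eq by (smt (verit))
  have iF: "(\<lambda>t. iter_circle_integral rs (\<lambda>ts. F (t#ts))) contour_integrable_on circlepath 0 r"
    using cF r by (auto intro!: contour_integrable_continuous_circlepath simp: path_image_circ)
  have "iter_circle_integral (r#rs) (\<lambda>ts. c * F ts) =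
     contour_integral (circlepath 0 r) (\<lambda>t. c * iter_circle_integral rs (\<lambda>ts. F (t#ts)))"
    using eq r by (auto intro!: contour_integral_cong simp: path_image_circ)
  also have "\<dots> = c * iter_circle_integral (r#rs) F"
    using contour_integral_lmul[OF iF] by simp
  finally show ?case using cont gd by simp
qed

lemma iter_diff:
  assumes "\<forall>r\<in>set rs. r > 0" "good rs F" "good rs G"
  shows "good rs (\<lambda>ts. F ts - G ts) \<and>
    iter_circle_integral rs (\<lambda>ts. F ts - G ts) = iter_circle_integral rs F - iter_circle_integral rs G"
proof -
  have s: "good rs (\<lambda>ts. (-1) * G ts) \<and> iter_circle_integral rs (\<lambda>ts. (-1) * G ts) = (-1) * iter_circle_integral rs G"
    using iter_scale[OF assms(1,3)] .
  have "good rs (\<lambda>ts. F ts + (-1) * G ts) \<and>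
    iter_circle_integral rs (\<lambda>ts. F ts + (-1) * G ts) = iter_circle_integral rs F + iter_circle_integral rs (\<lambda>ts. (-1) * G ts)"
    using iter_add[OF assms(1,2)] s by blast
  thus ?thesis using s by simp
qed

lemma iter_sum:
  assumes "\<forall>r\<in>set rs. r > 0" "finite A" "\<And>a. a \<in> A \<Longrightarrow> good rs (F a)"
  shows "good rs (\<lambda>ts. \<Sum>a\<in>A. F a ts) \<and>
    iter_circle_integral rs (\<lambda>ts. \<Sum>a\<in>A. F a ts) = (\<Sum>a\<in>A. iter_circle_integral rs (F a))"
  using assms(2,3)
proof (induction A rule: finite_induct)
  case empty then show ?case using iter_zero by simp
next
  case (insert x A)
  have "good rs (\<lambda>ts. F x ts + (\<Sum>a\<in>A. F a ts)) \<and>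
    iter_circle_integral rs (\<lambda>ts. F x ts + (\<Sum>a\<in>A. F a ts)) = iter_circle_integral rs (F x) + iter_circle_integral rs (\<lambda>ts. \<Sum>a\<in>A. F a ts)"
    using iter_add[OF assms(1), of "F x" "\<lambda>ts. \<Sum>a\<in>A. F a ts"] insert by auto
  then show ?case using insert by simp
qed


lemma iter_limit:
  assumes "\<forall>r\<in>set rs. r > 0"
    and "\<And>N. good rs (F N)"
    and "\<And>e. e > 0 \<Longrightarrow> \<exists>N0. \<forall>N\<ge>N0. \<forall>ts\<in>torus rs. cmod (F N ts - G ts) \<le> e"
  shows "good rs G \<and> (\<lambda>N. iter_circle_integral rs (F N)) \<longlonglongrightarrow> iter_circle_integral rs G"
  using assms
proof (induction rs arbitrary: F G)
  case Nil
  have "(\<lambda>N. F N []) \<longlonglongrightarrow> G []"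
  proof (rule LIMSEQ_I)
    fix e :: real assume "e > 0"
    then obtain N0 where "\<forall>N\<ge>N0. \<forall>ts\<in>torus []. cmod (F N ts - G ts) \<le> e/2"
      using Nil.prems(3)[of "e/2"] by auto
    then show "\<exists>no. \<forall>n\<ge>no. norm (F n [] - G []) < e" using Nil_in_torus \<open>e>0\<close>
      by (metis half_gt_zero less_le_trans linorder_not_le field_sum_of_halves less_add_same_cancel1)
  qed
  then show ?case by simp
next
  case (Cons r rs)
  have r: "r > 0" and pos: "\<forall>r\<in>set rs. r > 0" using Cons.prems by auto
  define K where "K = (\<Prod>r\<leftarrow>rs. 2*pi*r)"
  have K: "K \<ge> 0" unfolding K_def
  proof (intro prod_list_nonneg)
    fix x assume "x \<in> set (map (\<lambda>r. 2*pi*r) rs)"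
    then obtain y where "y \<in> set rs" "x = 2*pi*y" by auto
    thus "0 \<le> x" using pos by auto
  qed
  define \<phi> where "\<phi> N t = iter_circle_integral rs (\<lambda>ts. F N (t#ts))" for N t
  define \<psi> where "\<psi> t = iter_circle_integral rs (\<lambda>ts. G (t#ts))" for t
  have cphi: "continuous_on (sphere 0 r) (\<phi> N)" for N using Cons.prems(2)[of N] by (simp add: \<phi>_def)
  have gphi: "good rs (\<lambda>ts. F N (t#ts))" if "t \<in> sphere 0 r" for N t using Cons.prems(2)[of N] that by simp
  have unif_t: "\<exists>N0. \<forall>N\<ge>N0. \<forall>ts\<in>torus rs. cmod (F N (t#ts) - G (t#ts)) \<le> e"
    if t: "t \<in> sphere 0 r" and e: "e > 0" for t e
  proof -
    obtain N0 where "\<forall>N\<ge>N0. \<forall>ts\<in>torus (r#rs). cmod (F N ts - G ts) \<le> e" using Cons.prems(3) e by blast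
    moreover have "cmod t = r" using t by simp
    ultimately show ?thesis by (metis Cons_in_torus)
  qed
  have gpsi: "good rs (\<lambda>ts. G (t#ts))" if "t \<in> sphere 0 r" for t
    using Cons.IH[OF pos, of "\<lambda>N ts. F N (t#ts)" "\<lambda>ts. G (t#ts)"] gphi[OF that] unif_t[OF that] by blast
  have ul: "uniform_limit (sphere 0 r) \<phi> \<psi> sequentially"
  proof (rule uniform_limitI)
    fix e :: real assume e: "e > 0"
    obtain N0 where N0: "\<forall>N\<ge>N0. \<forall>ts\<in>torus (r#rs). cmod (F N ts - G ts) \<le> e / (2 * (K+1))"
      using Cons.prems(3)[of "e / (2 * (K+1))"] e K by auto
    have "dist (\<phi> N t) (\<psi> t) < e" if "N \<ge> N0" "t \<in> sphere 0 r" for N t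
    proof -
      have "\<phi> N t - \<psi> t = iter_circle_integral rs (\<lambda>ts. F N (t#ts) - G (t#ts))"
        using iter_diff[OF pos gphi[OF that(2)] gpsi[OF that(2)]] by (simp add: \<phi>_def \<psi>_def)
      also have "cmod \<dots> \<le> K * (e / (2 * (K+1)))"
      proof -
        have tr: "cmod t = r" using that(2) by simp
        have "\<forall>ts\<in>torus rs. cmod (F N (t#ts) - G (t#ts)) \<le> e / (2 * (K+1))"
          using N0 that(1) tr Cons_in_torus by metis
        moreover have "e / (2 * (K+1)) \<ge> 0" using e K by simp
        ultimately show ?thesis using iter_bound[OF pos, of "e / (2 * (K+1))" "\<lambda>ts. F N (t#ts) - G (t#ts)"]
          unfolding K_def by blast
      qed
      also have "\<dots> < e" using e K by (simp add: field_simps) (smt (verit) mult_nonneg_nonneg)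
      finally show ?thesis by (simp add: dist_norm)
    qed
    then show "\<forall>\<^sub>F N in sequentially. \<forall>t\<in>sphere 0 r. dist (\<phi> N t) (\<psi> t) < e"
      unfolding eventually_sequentially by (metis mem_sphere_0)
  qed
  have cpsi: "continuous_on (sphere 0 r) \<psi>"
    by (rule uniform_limit_theorem[OF _ ul]) (auto intro!: always_eventually cphi)
  have "((\<lambda>N. contour_integral (circlepath 0 r) (\<phi> N)) \<longlongrightarrow> contour_integral (circlepath 0 r) \<psi>) sequentially"
    by (rule contour_integral_uniform_limit_circlepath(2)[OF _ ul _ r])
       (use cphi r in \<open>auto intro!: always_eventually contour_integrable_continuous_circlepath simp: path_image_circ\<close>)
  moreover have "(\<lambda>N. contour_integral (circlepath 0 r) (\<phi> N)) = (\<lambda>N. iter_circle_integral (r#rs) (F N))"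
    by (simp add: \<phi>_def[abs_def])
  moreover have "contour_integral (circlepath 0 r) \<psi> = iter_circle_integral (r#rs) G"
    by (simp add: \<psi>_def[abs_def])
  ultimately show ?case using cpsi gpsi by (simp add: \<psi>_def[abs_def])
qed

lemma iter_sep:
  assumes "\<forall>r\<in>set rs. r > 0" "\<And>j. j < length rs \<Longrightarrow> continuous_on (sphere 0 (rs!j)) (g j)"
  shows "good rs (\<lambda>ts. \<Prod>j<length rs. g j (ts!j)) \<and>
    iter_circle_integral rs (\<lambda>ts. \<Prod>j<length rs. g j (ts!j)) =
      (\<Prod>j<length rs. contour_integral (circlepath 0 (rs!j)) (g j))"
  using assms
proof (induction rs arbitrary: g)
  case Nil then show ?case by simp
next
  case (Cons r rs)
  have r: "r > 0" and pos: "\<forall>r\<in>set rs. r > 0" using Cons.prems by auto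
  define H where "H ts = (\<Prod>j<length rs. g (Suc j) (ts!j))" for ts
  define P where "P = (\<Prod>j<length rs. contour_integral (circlepath 0 (rs!j)) (g (Suc j)))"
  have IH: "good rs H \<and> iter_circle_integral rs H = P"
    unfolding H_def P_def by (rule Cons.IH[OF pos]) (use Cons.prems(2) in force)
  have eqf: "(\<lambda>ts. \<Prod>j<length (r#rs). g j ((t#ts)!j)) = (\<lambda>ts. g 0 t * H ts)" for t
    by (simp only: H_def length_Cons prod.lessThan_Suc_shift nth_Cons_0 nth_Cons_Suc)
  have inner: "good rs (\<lambda>ts. g 0 t * H ts) \<and> iter_circle_integral rs (\<lambda>ts. g 0 t * H ts) = g 0 t * P" for t
    using iter_scale[OF pos, of H "g 0 t"] IH by simp
  have c0: "continuous_on (sphere 0 r) (g 0)" using Cons.prems(2)[of 0] by simp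
  have cont: "continuous_on (sphere 0 r) (\<lambda>t. g 0 t * P)" by (intro continuous_intros c0)
  have i0: "g 0 contour_integrable_on circlepath 0 r"
    using c0 r by (auto intro!: contour_integrable_continuous_circlepath simp: path_image_circ)
  have "iter_circle_integral (r#rs) (\<lambda>ts. \<Prod>j<length (r#rs). g j (ts!j)) =
      contour_integral (circlepath 0 r) (\<lambda>t. g 0 t * P)"
    by (simp only: iter_circle_integral.simps eqf inner)
  also have "\<dots> = contour_integral (circlepath 0 r) (g 0) * P" by (rule contour_integral_rmul[OF i0])
  also have "\<dots> = (\<Prod>j<length (r#rs). contour_integral (circlepath 0 ((r#rs)!j)) (g j))"
    by (simp only: P_def length_Cons prod.lessThan_Suc_shift nth_Cons_0 nth_Cons_Suc)
  finally show ?case using cont inner by (simp only: good.simps eqf) simp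
qed



definition Acoef :: "(nat \<Rightarrow> real) \<Rightarrow> nat \<Rightarrow> nat \<Rightarrow> real" where
  "Acoef a k n = (\<Sum>c\<in>compositions n k. \<Prod>l<length c. a (c!l))"

lemma finite_compositions: "finite (compositions n k)"
proof -
  have "compositions n k \<subseteq> {cs. set cs \<subseteq> {0..n} \<and> length cs = k}"
    by (auto simp: compositions_def member_le_sum_list)
  moreover have "finite {cs. set cs \<subseteq> {0..n} \<and> length cs = k}"
    by (rule finite_lists_length_eq) simp
  ultimately show ?thesis by (rule finite_subset)
qed

lemma length_le_sum_list: "\<forall>x\<in>set cs. 0 < (x::nat) \<Longrightarrow> length cs \<le> sum_list cs"
  by (induction cs) auto

lemma compositions_empty: assumes "n < k" shows " compositions n k = {}"
proof -
  have False if "cs \<in> compositions n k" for cs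
  proof -
    have "length cs \<le> sum_list cs" "length cs = k" "sum_list cs = n"
      using that length_le_sum_list by (auto simp: compositions_def)
    thus False using assms by simp
  qed
  thus ?thesis by blast
qed

lemma compositions_0: "compositions n 0 = (if n = 0 then {[]} else {})"
  by (auto simp: compositions_def)

lemma compositions_Suc:
  "compositions n (Suc k) = (\<Union>j\<in>{1..n}. (\<lambda>c. j # c) ` compositions (n - j) k)"
proof (intro set_eqI iffI)
  fix cs assume "cs \<in> compositions n (Suc k)"
  then obtain j c where that: "cs = j # c" "length c = k" "0 < j" "\<forall>x\<in>set c. 0 < x" "j + sum_list c = n"
    by (auto simp: compositions_def length_Suc_conv)
  then show "cs \<in> (\<Union>j\<in>{1..n}. (\<lambda>c. j # c) ` compositions (n - j) k)"
  proof -
    have "c \<in> compositions (n - j) k" "j \<in> {1..n}" using that by (auto simp: compositions_def)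
    moreover have "cs = (\<lambda>c. j # c) c" using \<open>cs = j # c\<close> by simp
    ultimately show ?thesis by blast
  qed
next
  fix cs assume "cs \<in> (\<Union>j\<in>{1..n}. (\<lambda>c. j # c) ` compositions (n - j) k)"
  then show "cs \<in> compositions n (Suc k)" by (auto simp: compositions_def)
qed

lemma Acoef_0: "Acoef a 0 n = (if n = 0 then 1 else 0)"
  by (simp add: Acoef_def compositions_0)

lemma Acoef_empty: "n < k \<Longrightarrow> Acoef a k n = 0"
  by (simp add: Acoef_def compositions_empty)

lemma Acoef_nonneg: "(\<And>j. a j \<ge> 0) \<Longrightarrow> Acoef a k n \<ge> 0"
  unfolding Acoef_def by (intro sum_nonneg prod_nonneg) auto

lemma Acoef_Suc:
  assumes "a 0 = 0"
  shows "Acoef a (Suc k) n = (\<Sum>j\<le>n. a j * Acoef a k (n - j))"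
proof -
  have "Acoef a (Suc k) n = (\<Sum>j\<in>{1..n}. \<Sum>cs\<in>(\<lambda>c. j # c) ` compositions (n - j) k. \<Prod>l<length cs. a (cs!l))"
    unfolding Acoef_def compositions_Suc
    by (rule sum.UNION_disjoint) (auto simp: finite_compositions)
  also have "\<dots> = (\<Sum>j\<in>{1..n}. a j * Acoef a k (n - j))"
  proof (rule sum.cong[OF refl])
    fix j
    have "(\<Sum>cs\<in>(\<lambda>c. j # c) ` compositions (n - j) k. \<Prod>l<length cs. a (cs!l))
        = (\<Sum>c\<in>compositions (n - j) k. \<Prod>l<length (j#c). a ((j#c)!l))"
      by (rule sum.reindex_cong[where l="\<lambda>c. j # c"]) (auto simp: inj_on_def)
    also have "\<dots> = (\<Sum>c\<in>compositions (n - j) k. a j * (\<Prod>l<length c. a (c!l)))"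
      by (simp only: length_Cons prod.lessThan_Suc_shift nth_Cons_0 nth_Cons_Suc)
    also have "\<dots> = a j * Acoef a k (n - j)" by (simp add: Acoef_def sum_distrib_left)
    finally show "(\<Sum>cs\<in>(\<lambda>c. j # c) ` compositions (n - j) k. \<Prod>l<length cs. a (cs!l)) = a j * Acoef a k (n - j)" .
  qed
  also have "\<dots> = (\<Sum>j\<le>n. a j * Acoef a k (n - j))"
  proof -
    have "{..n} = insert 0 {1..n}" by auto
    thus ?thesis using assms by simp
  qed
  finally show ?thesis .
qed

definition psum :: "(nat \<Rightarrow> real) \<Rightarrow> 'a::{real_normed_field,banach} \<Rightarrow> 'a" where
  "psum a w = (\<Sum>j. of_real (a j) * w ^ j)"

lemma pser_psum: "pser a w = psum a w"
  by (simp add: pser_def psum_def)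

lemma psum_real: "psum a (s::real) = (\<Sum>j. a j * s ^ j)"
  by (simp add: psum_def)

lemma psum_abs_summable:
  assumes "ereal (norm w) < conv_radius a"
  shows "summable (\<lambda>j. norm (of_real (a j) * (w::'a::{real_normed_field,banach}) ^ j))"
proof -
  have "summable (\<lambda>j. norm (a j * norm w ^ j))"
    by (rule abs_summable_in_conv_radius) (use assms in simp)
  thus ?thesis by (simp add: norm_mult norm_power abs_mult)
qed

lemma psum_pow:
  fixes w :: "'a::{real_normed_field,banach}"
  assumes nn: "\<And>j. a j \<ge> 0" and a0: "a 0 = 0" and w: "ereal (norm w) < conv_radius a"
  shows "(\<lambda>n. of_real (Acoef a k n) * w ^ n) sums (psum a w ^ k) \<and>
         summable (\<lambda>n. norm (of_real (Acoef a k n) * w ^ n))"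
proof (induction k)
  case 0
  have e: "(\<lambda>n. of_real (Acoef a 0 n) * w ^ n) = (\<lambda>n. if n = 0 then 1 else 0)"
    by (auto simp: Acoef_0)
  have s1: "(\<lambda>n::nat. if n = 0 then (1::'a) else 0) sums 1"
    using sums_single[of 0 "\<lambda>_. 1::'a"] by simp
  have e2: "(\<lambda>n. norm (of_real (Acoef a 0 n) * w ^ n)) = (\<lambda>n. if n = 0 then 1 else 0)"
    by (auto simp: Acoef_0)
  have "summable (\<lambda>n::nat. if n = 0 then (1::real) else 0)"
    using sums_single[of 0 "\<lambda>_. 1::real"] sums_summable by blast
  then show ?case unfolding e e2 using s1 by simp
next
  case (Suc k)
  define f where "f j = of_real (a j) * w ^ j" for j
  define g where "g n = of_real (Acoef a k n) * w ^ n" for n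
  have sf: "summable (\<lambda>j. norm (f j))" unfolding f_def by (rule psum_abs_summable[OF w])
  have sg: "summable (\<lambda>j. norm (g j))" using Suc g_def by simp
  have fg: "f i * g (n - i) = of_real (a i * Acoef a k (n - i)) * w ^ n" if "i \<le> n" for i n
  proof -
    have "w ^ i * w ^ (n - i) = w ^ n" using that by (simp flip: power_add)
    thus ?thesis
      unfolding f_def g_def by (metis (no_types, lifting) mult.assoc mult.left_commute of_real_mult)
  qed
  have eq: "(\<Sum>i\<le>n. f i * g (n - i)) = of_real (Acoef a (Suc k) n) * w ^ n" for n
  proof -
    have "(\<Sum>i\<le>n. f i * g (n - i)) = (\<Sum>i\<le>n. of_real (a i * Acoef a k (n - i)) * w ^ n)"
      by (intro sum.cong refl) (simp add: fg)
    also have "\<dots> = of_real (Acoef a (Suc k) n) * w ^ n"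
      by (simp add: Acoef_Suc[of a, OF a0] sum_distrib_right)
    finally show ?thesis .
  qed
  have "(\<lambda>n. \<Sum>i\<le>n. f i * g (n - i)) sums ((\<Sum>j. f j) * (\<Sum>j. g j))"
    by (rule Cauchy_product_sums[OF sf sg])
  moreover have "(\<Sum>j. f j) = psum a w" by (simp add: f_def psum_def)
  moreover have "(\<Sum>j. g j) = psum a w ^ k" using Suc by (simp add: g_def sums_iff)
  ultimately have s1: "(\<lambda>n. of_real (Acoef a (Suc k) n) * w ^ n) sums (psum a w ^ Suc k)"
    by (simp add: eq)
  have "summable (\<lambda>n. \<Sum>i\<le>n. norm (f i) * norm (g (n - i)))"
    using summable_Cauchy_product[of "\<lambda>i. norm (f i)" "\<lambda>i. norm (g i)"] sf sg by simp
  moreover have "(\<Sum>i\<le>n. norm (f i) * norm (g (n - i))) = norm (of_real (Acoef a (Suc k) n) * w ^ n)" for n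
  proof -
    have "(\<Sum>i\<le>n. norm (f i) * norm (g (n - i))) = (\<Sum>i\<le>n. (a i * Acoef a k (n - i)) * norm w ^ n)"
    proof (intro sum.cong refl)
      fix i assume "i \<in> {..n}"
      hence "norm (f i) * norm (g (n - i)) = norm (of_real (a i * Acoef a k (n - i)) * w ^ n)"
        by (simp add: fg flip: norm_mult)
      also have "\<dots> = (a i * Acoef a k (n - i)) * norm w ^ n"
        using nn[of i] Acoef_nonneg[of a k "n-i", OF nn] by (simp add: norm_mult norm_power)
      finally show "norm (f i) * norm (g (n - i)) = (a i * Acoef a k (n - i)) * norm w ^ n" .
    qed
    also have "\<dots> = Acoef a (Suc k) n * norm w ^ n"
      by (simp add: Acoef_Suc[of a, OF a0] sum_distrib_right)
    also have "\<dots> = norm (of_real (Acoef a (Suc k) n) * w ^ n)"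
      using Acoef_nonneg[of a "Suc k" n, OF nn] by (simp add: norm_mult norm_power)
    finally show ?thesis .
  qed
  ultimately show ?case using s1 by simp
qed



lemma deriv_funpow_const: "(deriv ^^ Suc d) (\<lambda>_. c) = (\<lambda>_. 0::complex)"
  by (induction d) auto

lemma circ_power:
  assumes r: "r > 0"
  shows "contour_integral (circlepath 0 r) (\<lambda>t. t^n / t^(Suc l)) = (if n = l then 2*pi*\<i> else 0)"
proof (cases "n \<le> l")
  case True
  define d where "d = l - n"
  have "((\<lambda>u. (\<lambda>_. 1::complex) u / (u - 0)^(Suc d)) has_contour_integral
          ((2*pi*\<i>) / fact d * (deriv^^d) (\<lambda>_. 1) 0)) (circlepath 0 r)"
    by (rule Cauchy_has_contour_integral_higher_derivative_circlepath) (use r in auto)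
  moreover have "(deriv^^d) (\<lambda>_. 1::complex) 0 = (if d = 0 then 1 else 0)"
    by (cases d) (simp_all only: deriv_funpow_const, simp_all)
  moreover have "t^n / t^(Suc l) = 1 / t^(Suc d)" if "t \<in> path_image (circlepath 0 r)" for t
  proof -
    have t0: "t \<noteq> 0" using that r by (auto simp: path_image_circ)
    have "t^(Suc l) = t^n * t^(Suc d)" using True by (simp add: d_def flip: power_add)
    thus ?thesis using t0 by simp
  qed
  ultimately have "contour_integral (circlepath 0 r) (\<lambda>t. t^n / t^(Suc l)) =
      (2*pi*\<i>) / fact d * (if d = 0 then 1 else 0)"
  proof -
    assume h1: "((\<lambda>u. (\<lambda>_. 1::complex) u / (u - 0)^(Suc d)) has_contour_integral
          ((2*pi*\<i>) / fact d * (deriv^^d) (\<lambda>_. 1) 0)) (circlepath 0 r)"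
      and h2: "(deriv^^d) (\<lambda>_. 1::complex) 0 = (if d = 0 then 1 else 0)"
      and h3: "\<And>t. t \<in> path_image (circlepath 0 r) \<Longrightarrow> t^n / t^(Suc l) = 1 / t^(Suc d)"
    have "contour_integral (circlepath 0 r) (\<lambda>t. t^n / t^(Suc l)) =
          contour_integral (circlepath 0 r) (\<lambda>u. (\<lambda>_. 1::complex) u / (u - 0)^(Suc d))"
      by (intro contour_integral_cong refl) (metis diff_zero h3)
    also have "\<dots> = (2*pi*\<i>) / fact d * (deriv^^d) (\<lambda>_. 1) 0" by (rule contour_integral_unique[OF h1])
    finally show ?thesis using h2 by simp
  qed
  thus ?thesis using True by (auto simp: d_def)
next
  case False
  define d where "d = n - Suc l"
  have "((\<lambda>u. (\<lambda>u. u^(Suc d)) u / (u - 0)^(Suc 0)) has_contour_integral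
          ((2*pi*\<i>) / fact 0 * (deriv^^0) (\<lambda>u. u^(Suc d)) 0)) (circlepath 0 r)"
    by (rule Cauchy_has_contour_integral_higher_derivative_circlepath)
       (use r in \<open>auto intro!: holomorphic_intros continuous_intros\<close>)
  moreover have "t^n / t^(Suc l) = t^(Suc d) / (t - 0)^(Suc 0)" if "t \<in> path_image (circlepath 0 r)" for t
  proof -
    have t0: "t \<noteq> 0" using that r by (auto simp: path_image_circ)
    have "Suc l + d = n" using False by (simp add: d_def)
    hence "t^n = t^(Suc l) * t^d" by (metis power_add)
    thus ?thesis using t0 by simp
  qed
  ultimately have "contour_integral (circlepath 0 r) (\<lambda>t. t^n / t^(Suc l)) = 0"
  proof -
    assume h1: "((\<lambda>u. (\<lambda>u. u^(Suc d)) u / (u - 0)^(Suc 0)) has_contour_integral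
          ((2*pi*\<i>) / fact 0 * (deriv^^0) (\<lambda>u. u^(Suc d)) 0)) (circlepath 0 r)"
      and h3: "\<And>t. t \<in> path_image (circlepath 0 r) \<Longrightarrow> t^n / t^(Suc l) = t^(Suc d) / (t - 0)^(Suc 0)"
    have "contour_integral (circlepath 0 r) (\<lambda>t. t^n / t^(Suc l)) =
          contour_integral (circlepath 0 r) (\<lambda>u. (\<lambda>u. u^(Suc d)) u / (u - 0)^(Suc 0))"
      by (intro contour_integral_cong refl) (metis diff_zero h3)
    also have "\<dots> = (2*pi*\<i>) / fact 0 * (deriv^^0) (\<lambda>u. u^(Suc d)) 0" by (rule contour_integral_unique[OF h1])
    finally show ?thesis by simp
  qed
  thus ?thesis using False by auto
qed

lemma tail_bound:
  fixes f :: "nat \<Rightarrow> 'a::banach"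
  assumes "summable (\<lambda>n. norm (f n))"
  shows "norm (suminf f - (\<Sum>n<N. f n)) \<le> (\<Sum>n. norm (f n)) - (\<Sum>n<N. norm (f n))"
proof -
  have sf: "summable f" using assms summable_norm_cancel by blast
  have "suminf f - (\<Sum>n<N. f n) = (\<Sum>n. f (n + N))" using suminf_minus_initial_segment[OF sf] by simp
  also have "norm \<dots> \<le> (\<Sum>n. norm (f (n + N)))"
    by (rule summable_norm) (use assms summable_iff_shift[of "\<lambda>n. norm (f n)" N] in simp)
  also have "\<dots> = (\<Sum>n. norm (f n)) - (\<Sum>n<N. norm (f n))"
    using suminf_minus_initial_segment[OF assms] by simp
  finally show ?thesis .
qed

lemma tail_small:
  fixes b :: "nat \<Rightarrow> real"
  assumes "summable b" "e > 0"
  shows "\<exists>N0. \<forall>N\<ge>N0. suminf b - (\<Sum>n<N. b n) \<le> e"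
proof -
  obtain N0 where "\<forall>N\<ge>N0. norm ((\<Sum>n<N. b n) - suminf b) < e"
    using LIMSEQ_D[OF summable_LIMSEQ[OF assms(1)] assms(2)] by blast
  thus ?thesis by (auto intro!: exI[of _ N0])
qed

lemma coef_extract:
  fixes c :: "nat \<Rightarrow> complex"
  assumes r: "r > 0" and sm: "summable (\<lambda>l. norm (c l) * (1/r)^l)"
  shows "contour_integral (circlepath 0 r) (\<lambda>t. t^n * (\<Sum>l. c l * (1/t)^l) * (1/t)) = 2*pi*\<i> * c n"
proof -
  define F where "F L t = (\<Sum>l<L. c l * (t^n / t^(Suc l)))" for L t
  define G where "G t = t^n * (\<Sum>l. c l * (1/t)^l) * (1/t)" for t
  define S where "S = (\<Sum>l. norm (c l) * (1/r)^l)"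
  have nz: "t \<noteq> 0" if "t \<in> sphere 0 r" for t using that r by auto
  have cont1: "continuous_on (sphere 0 r) (\<lambda>t. c l * (t^n / t^(Suc l)))" for l
    by (intro continuous_intros) (use nz in auto)
  have i1: "(\<lambda>t. c l * (t^n / t^(Suc l))) contour_integrable_on circlepath 0 r" for l
    by (rule contour_integrable_continuous_circlepath) (simp only: path_image_circ[OF r] cont1)
  have intF: "F L contour_integrable_on circlepath 0 r" for L
    unfolding F_def by (rule contour_integrable_sum) (simp, rule i1)
  have valF: "contour_integral (circlepath 0 r) (F L) = (if n < L then 2*pi*\<i> * c n else 0)" for L
  proof -
    have "contour_integral (circlepath 0 r) (F L) = (\<Sum>l<L. contour_integral (circlepath 0 r) (\<lambda>t. c l * (t^n / t^(Suc l))))"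
      unfolding F_def by (rule contour_integral_sum) (simp, rule i1)
    also have "\<dots> = (\<Sum>l<L. if l = n then c l * (2*pi*\<i>) else 0)"
    proof (intro sum.cong refl)
      fix l
      have "continuous_on (sphere 0 r) (\<lambda>t::complex. t^n / t^(Suc l))"
        by (intro continuous_intros) (use nz in auto)
      then have ii: "(\<lambda>t::complex. t^n / t^(Suc l)) contour_integrable_on circlepath 0 r"
        by (intro contour_integrable_continuous_circlepath) (simp only: path_image_circ[OF r])
      then show "contour_integral (circlepath 0 r) (\<lambda>t. c l * (t^n / t^(Suc l))) = (if l = n then c l * (2*pi*\<i>) else 0)"
        by (subst contour_integral_lmul[OF ii]) (simp only: circ_power[OF r], simp)
    qed
    also have "\<dots> = (if n < L then 2*pi*\<i> * c n else 0)"
      by (simp add: sum.delta')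
    finally show ?thesis .
  qed
  have snorm: "summable (\<lambda>l. norm (c l * (1/t)^l))" if "t \<in> sphere 0 r" for t
    using sm that by (simp add: norm_mult norm_power norm_divide)
  have snorm_eq: "(\<lambda>l. norm (c l * (1/t)^l)) = (\<lambda>l. norm (c l) * (1/r)^l)" if "t \<in> sphere 0 r" for t
    using that by (simp add: norm_mult norm_power norm_divide)
  have ul: "uniform_limit (sphere 0 r) F G sequentially"
  proof (rule uniform_limitI)
    fix e :: real assume e: "e > 0"
    define K where "K = r^n / r"
    have K: "K > 0" using r by (simp add: K_def)
    obtain N0 where N0: "\<forall>N\<ge>N0. S - (\<Sum>l<N. norm (c l) * (1/r)^l) \<le> e / (2*K)"
      using tail_small[OF sm, of "e/(2*K)"] e K unfolding S_def by auto
    have "dist (F N t) (G t) < e" if "N \<ge> N0" "t \<in> sphere 0 r" for N t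
    proof -
      have t0: "t \<noteq> 0" using nz that(2) .
      have "F N t = t^n * (1/t) * (\<Sum>l<N. c l * (1/t)^l)"
        unfolding F_def sum_distrib_left
        by (intro sum.cong refl) (simp add: field_simps t0)
      moreover have "G t = t^n * (1/t) * (\<Sum>l. c l * (1/t)^l)" by (simp add: G_def)
      ultimately have "dist (F N t) (G t) = norm (t^n * (1/t)) * norm ((\<Sum>l. c l * (1/t)^l) - (\<Sum>l<N. c l * (1/t)^l))"
        by (simp add: dist_norm norm_minus_commute flip: norm_mult) (simp add: algebra_simps diff_divide_distrib)
      also have "\<dots> \<le> K * (S - (\<Sum>l<N. norm (c l) * (1/r)^l))"
      proof (rule mult_mono)
        show "norm (t^n * (1/t)) \<le> K" using that(2) by (simp add: K_def norm_mult norm_power norm_divide)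
        show "norm ((\<Sum>l. c l * (1/t)^l) - (\<Sum>l<N. c l * (1/t)^l)) \<le> S - (\<Sum>l<N. norm (c l) * (1/r)^l)"
          using tail_bound[OF snorm[OF that(2)], of N] snorm_eq[OF that(2)] fun_cong[OF snorm_eq[OF that(2)]]
          by (simp add: S_def)
      qed (use K in auto)
      also have "\<dots> \<le> K * (e / (2*K))" using N0 that(1) K by (intro mult_left_mono) auto
      also have "\<dots> < e" using K e by simp
      finally show ?thesis .
    qed
    thus "\<forall>\<^sub>F N in sequentially. \<forall>t\<in>sphere 0 r. dist (F N t) (G t) < e"
      unfolding eventually_sequentially by blast
  qed
  have "(\<lambda>L. contour_integral (circlepath 0 r) (F L)) \<longlonglongrightarrow> contour_integral (circlepath 0 r) G"
    by (rule contour_integral_uniform_limit_circlepath(2)[OF _ ul _ r]) (auto intro!: always_eventually intF)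
  moreover have "(\<lambda>L. contour_integral (circlepath 0 r) (F L)) \<longlonglongrightarrow> 2*pi*\<i> * c n"
    unfolding valF by (rule tendsto_eventually) (auto simp: eventually_sequentially intro!: exI[of _ "Suc n"])
  ultimately show ?thesis unfolding G_def[abs_def] using LIMSEQ_unique by blast
qed



lemma nat_norm_infsum:
  fixes f :: "nat \<Rightarrow> 'a::banach"
  assumes "summable (\<lambda>n. norm (f n))"
  shows "infsum f UNIV = suminf f" "f summable_on UNIV"
proof -
  have h: "(f has_sum suminf f) UNIV"
    by (rule norm_summable_imp_has_sum[OF assms summable_sums[OF summable_norm_cancel[OF assms]]])
  show "infsum f UNIV = suminf f" by (rule infsumI[OF h])
  show "f summable_on UNIV" using h by (auto simp: summable_on_def)
qed

lemma swap_series: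
  fixes u :: "nat \<Rightarrow> nat \<Rightarrow> complex" and v :: "nat \<Rightarrow> nat \<Rightarrow> real"
  assumes zero: "\<And>k n. n < k \<Longrightarrow> u k n = 0"
    and bound: "\<And>k n. norm (u k n) \<le> v k n"
    and sv: "\<And>k. summable (v k)" and sV: "summable (\<lambda>k. suminf (v k))"
  shows "(\<lambda>n. \<Sum>k\<le>n. u k n) sums (\<Sum>k. \<Sum>n. u k n)"
proof -
  have su: "summable (\<lambda>n. norm (u k n))" for k
    by (rule summable_comparison_test'[OF sv[of k]]) (use bound in auto)
  have su_le: "(\<Sum>n. norm (u k n)) \<le> suminf (v k)" for k
    by (rule suminf_le) (use bound su sv in auto)
  have A1: "(\<lambda>n. norm (u k n)) summable_on UNIV" for k
    by (rule norm_summable_imp_summable_on) (use su in simp)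
  have A2: "(\<lambda>k. norm (infsum (\<lambda>n. norm (u k n)) UNIV)) summable_on UNIV"
  proof -
    have e: "infsum (\<lambda>n. norm (u k n)) UNIV = (\<Sum>n. norm (u k n))" for k
      by (rule nat_norm_infsum(1)) (use su in simp)
    have "summable (\<lambda>k. norm (norm ((\<Sum>n. norm (u k n)))))"
      by (rule summable_comparison_test'[OF sV]) (use su_le in \<open>auto simp: suminf_nonneg[OF su]\<close>)
    then show ?thesis unfolding e by (intro norm_summable_imp_summable_on) simp
  qed
  have abs: "(\<lambda>x. norm ((\<lambda>(k,n). u k n) x)) summable_on (SIGMA k:UNIV. UNIV)"
    using Infinite_Sum.abs_summable_on_Sigma_iff[where f="\<lambda>(k,n). u k n" and A=UNIV and B="\<lambda>_. UNIV"] A1 A2 by simp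
  have summ: "(\<lambda>(k,n). u k n) summable_on (UNIV \<times> UNIV)"
    using abs_summable_summable[OF abs] by simp
  have swap: "infsum (\<lambda>k. infsum (\<lambda>n. u k n) UNIV) UNIV = infsum (\<lambda>n. infsum (\<lambda>k. u k n) UNIV) UNIV"
    by (rule infsum_swap_banach) (use summ in simp)
  have inner_n: "infsum (\<lambda>k. u k n) UNIV = (\<Sum>k\<le>n. u k n)" for n
  proof -
    have "infsum (\<lambda>k. u k n) UNIV = infsum (\<lambda>k. u k n) {..n}"
      by (rule infsum_cong_neutral) (auto intro: zero)
    thus ?thesis by simp
  qed
  have inner_k: "infsum (\<lambda>n. u k n) UNIV = (\<Sum>n. u k n)" for k
    by (rule nat_norm_infsum(1)[OF su])
  have outer_k: "infsum (\<lambda>k. \<Sum>n. u k n) UNIV = (\<Sum>k. \<Sum>n. u k n)"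
  proof (rule nat_norm_infsum(1))
    show "summable (\<lambda>k. norm (\<Sum>n. u k n))"
    proof (rule summable_comparison_test'[OF sV])
      fix k
      have "norm (\<Sum>n. u k n) \<le> (\<Sum>n. norm (u k n))" by (rule summable_norm[OF su])
      also have "\<dots> \<le> suminf (v k)" by (rule su_le)
      finally show "norm (norm (\<Sum>n. u k n)) \<le> suminf (v k)" by simp
    qed
  qed
  have summ2: "(\<lambda>(n,k). u k n) summable_on (SIGMA n:UNIV. UNIV)"
    using summ summable_on_swap[of "\<lambda>(k,n). u k n" UNIV UNIV] by simp
  have sn: "(\<lambda>n. infsum (\<lambda>k. u k n) UNIV) summable_on UNIV"
    using summable_on_Sigma_banach[of "\<lambda>n k. u k n" UNIV "\<lambda>_. UNIV"] summ2 by simp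
  have "((\<lambda>n. infsum (\<lambda>k. u k n) UNIV) has_sum (\<Sum>k. \<Sum>n. u k n)) UNIV"
    using has_sum_infsum[OF sn] swap inner_k outer_k by simp
  then have "((\<lambda>n. \<Sum>k\<le>n. u k n) has_sum (\<Sum>k. \<Sum>n. u k n)) UNIV"
    using inner_n by simp
  then show ?thesis by (rule has_sum_imp_sums)
qed

lemma sum_lists_prod:
  fixes f :: "nat \<Rightarrow> 'b \<Rightarrow> 'c::comm_semiring_1"
  assumes S: "finite S"
  shows "(\<Sum>cs\<in>{cs. length cs = m \<and> (\<forall>c\<in>set cs. c \<in> S)}. \<Prod>i<m. f i (cs!i)) = (\<Prod>i<m. \<Sum>c\<in>S. f i c)"
proof (induction m arbitrary: f)
  case 0
  have "{cs. length cs = 0 \<and> (\<forall>c\<in>set cs. c \<in> S)} = {[]}" by auto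
  then show ?case by simp
next
  case (Suc m)
  define L where "L = {cs. length cs = m \<and> (\<forall>c\<in>set cs. c \<in> S)}"
  have finL: "finite L"
  proof -
    have "L = {xs. set xs \<subseteq> S \<and> length xs = m}" by (auto simp: L_def)
    thus ?thesis using finite_lists_length_eq[OF S, of m] by simp
  qed
  have eq: "{cs. length cs = Suc m \<and> (\<forall>c\<in>set cs. c \<in> S)} = (\<lambda>(c,cs). c#cs) ` (S \<times> L)"
    by (auto simp: L_def length_Suc_conv image_iff)
  have inj: "inj_on (\<lambda>(c,cs). c#cs) (S \<times> L)" by (auto simp: inj_on_def)
  have "(\<Sum>cs\<in>{cs. length cs = Suc m \<and> (\<forall>c\<in>set cs. c \<in> S)}. \<Prod>i<Suc m. f i (cs!i))
      = (\<Sum>z\<in>S \<times> L. \<Prod>i<Suc m. f i ((fst z # snd z)!i))"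
    unfolding eq by (subst sum.reindex[OF inj]) (simp add: case_prod_beta)
  also have "\<dots> = (\<Sum>z\<in>S \<times> L. f 0 (fst z) * (\<Prod>i<m. f (Suc i) (snd z ! i)))"
    by (simp only: prod.lessThan_Suc_shift nth_Cons_0 nth_Cons_Suc)
  also have "\<dots> = (\<Sum>c\<in>S. \<Sum>cs\<in>L. f 0 c * (\<Prod>i<m. f (Suc i) (cs ! i)))"
    unfolding sum.cartesian_product by (simp add: case_prod_beta)
  also have "\<dots> = (\<Sum>c\<in>S. f 0 c) * (\<Sum>cs\<in>L. \<Prod>i<m. f (Suc i) (cs ! i))"
    by (simp add: sum_product)
  also have "\<dots> = (\<Sum>c\<in>S. f 0 c) * (\<Prod>i<m. \<Sum>c\<in>S. f (Suc i) c)"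
    using Suc.IH[of "\<lambda>i. f (Suc i)"] by (simp add: L_def)
  also have "\<dots> = (\<Prod>i<Suc m. \<Sum>c\<in>S. f i c)"
    by (simp only: prod.lessThan_Suc_shift)
  finally show ?case .
qed

lemma Dcoeff_eq:
  assumes m: "m \<ge> 1"
  shows "Dcoeff m p n = (\<Sum>k\<le>n. \<Prod>i<m. Acoef (p i) k n)"
proof -
  define L where "L k = {cs. length cs = m \<and> (\<forall>c\<in>set cs. c \<in> compositions n k)}" for k
  have ct: "comp_tuples m n = (\<Union>k\<in>{..n}. L k)"
  proof (intro set_eqI iffI)
    fix cs assume "cs \<in> comp_tuples m n"
    then obtain k where k: "length cs = m" "\<forall>c\<in>set cs. c \<in> compositions n k"
      by (auto simp: comp_tuples_def)
    have "cs ! 0 \<in> set cs" using k m by auto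
    hence "compositions n k \<noteq> {}" using k by auto
    hence "k \<le> n" using compositions_empty[of n k] by (meson not_le)
    thus "cs \<in> (\<Union>k\<in>{..n}. L k)" using k by (auto simp: L_def)
  next
    fix cs assume "cs \<in> (\<Union>k\<in>{..n}. L k)"
    thus "cs \<in> comp_tuples m n" by (auto simp: L_def comp_tuples_def)
  qed
  have finL: "finite (L k)" for k
  proof -
    have "L k \<subseteq> {cs. set cs \<subseteq> compositions n k \<and> length cs = m}" by (auto simp: L_def)
    thus ?thesis using finite_lists_length_eq[OF finite_compositions] finite_subset by blast
  qed
  have disj: "L k \<inter> L k' = {}" if "k \<noteq> k'" for k k'
  proof (rule ccontr)
    assume "L k \<inter> L k' \<noteq> {}"
    then obtain cs where "cs \<in> L k" "cs \<in> L k'" by blast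
    moreover have "cs ! 0 \<in> set cs" using \<open>cs \<in> L k\<close> m by (auto simp: L_def)
    ultimately have "cs ! 0 \<in> compositions n k" "cs ! 0 \<in> compositions n k'" by (auto simp: L_def)
    thus False using that by (auto simp: compositions_def)
  qed
  have "Dcoeff m p n = (\<Sum>k\<le>n. \<Sum>cs\<in>L k. \<Prod>i<m. \<Prod>l<length (cs ! i). p i (cs ! i ! l))"
    unfolding Dcoeff_def ct by (rule sum.UNION_disjoint) (use finL disj in auto)
  also have "\<dots> = (\<Sum>k\<le>n. \<Prod>i<m. Acoef (p i) k n)"
    by (intro sum.cong refl) (simp add: L_def Acoef_def
        sum_lists_prod[OF finite_compositions, where f="\<lambda>i c. \<Prod>l<length c. p i (c!l)"])
  finally show ?thesis .
qed



lemma conv_radius_of_real_seq: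
  "conv_radius (\<lambda>n. (of_real (a n) :: 'a::{real_normed_div_algebra,banach})) = conv_radius a"
proof -
  have "conv_radius (\<lambda>n. (of_real (a n) :: 'a)) = conv_radius (\<lambda>n. norm (of_real (a n) :: 'a))"
    by (rule conv_radius_norm[symmetric])
  also have "\<dots> = conv_radius (\<lambda>n. norm (a n))" by simp
  also have "\<dots> = conv_radius a" by (rule conv_radius_norm)
  finally show ?thesis .
qed

lemma psum_continuous:
  assumes "ereal \<rho> < conv_radius a"
  shows "continuous_on (cball 0 \<rho>) (psum a :: complex \<Rightarrow> complex)"
proof -
  have "continuous_on (cball 0 \<rho>) (\<lambda>x. suminf (\<lambda>i. (of_real (a i) :: complex) * (x - 0) ^ i))"
    by (rule powser_continuous_suminf) (use assms in \<open>simp add: conv_radius_of_real_seq\<close>)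
  thus ?thesis by (simp add: psum_def[abs_def])
qed

lemma psum_norm_le:
  fixes w :: complex
  assumes nn: "\<And>j. a j \<ge> 0" and w: "ereal (norm w) < conv_radius a"
  shows "norm (psum a w) \<le> psum a (norm w)"
proof -
  have s: "summable (\<lambda>j. norm (of_real (a j) * w ^ j))" by (rule psum_abs_summable[OF w])
  have "norm (psum a w) \<le> (\<Sum>j. norm (of_real (a j) * w ^ j))"
    unfolding psum_def by (rule summable_norm[OF s])
  also have "\<dots> = psum a (norm w)"
    using nn by (simp add: psum_def norm_mult norm_power)
  finally show ?thesis .
qed

lemma psum_real_sums:
  fixes s :: real
  assumes nn: "\<And>j. a j \<ge> 0" and a0: "a 0 = 0" and s: "s \<ge> 0" "ereal s < conv_radius a"
  shows "(\<lambda>n. Acoef a k n * s ^ n) sums (psum a s ^ k)"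
  using conjunct1[OF psum_pow[of a, OF nn a0, of s k]] s by simp

lemma psum_nonneg:
  fixes s :: real
  assumes nn: "\<And>j. a j \<ge> 0" and s: "s \<ge> 0" "ereal s < conv_radius a"
  shows "psum a s \<ge> 0"
proof -
  have "summable (\<lambda>j. norm (of_real (a j) * s ^ j))" by (rule psum_abs_summable) (use s in simp)
  hence "summable (\<lambda>j. a j * s ^ j)" using nn s by simp
  thus ?thesis unfolding psum_def using nn s by (simp add: suminf_nonneg)
qed

lemma Acoef_le:
  fixes s :: real
  assumes nn: "\<And>j. a j \<ge> 0" and a0: "a 0 = 0" and s: "s \<ge> 0" "ereal s < conv_radius a"
  shows "Acoef a k n * s ^ n \<le> psum a s ^ k"
proof -
  have sm: "(\<lambda>n. Acoef a k n * s ^ n) sums (psum a s ^ k)" by (rule psum_real_sums[OF nn a0 s])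
  have "(\<Sum>i\<in>{n}. Acoef a k i * s ^ i) \<le> (\<Sum>i. Acoef a k i * s ^ i)"
    by (rule sum_le_suminf) (use sm s Acoef_nonneg[OF nn] in \<open>auto simp: sums_iff\<close>)
  thus ?thesis using sm by (simp add: sums_iff)
qed

lemma psum_small:
  fixes s s0 :: real
  assumes nn: "\<And>j. a j \<ge> 0" and a0: "a 0 = 0" and s: "0 \<le> s" "s \<le> s0" "0 < s0"
    and s0: "ereal s0 < conv_radius a"
  shows "psum a s \<le> s / s0 * psum a s0"
proof -
  have s0': "ereal s < conv_radius a" using s s0 by (meson ereal_less_eq(3) order_le_less_trans)
  have sm0: "summable (\<lambda>j. a j * s0 ^ j)"
    using psum_abs_summable[of s0 a] s0 s nn by simp
  have sm: "summable (\<lambda>j. a j * s ^ j)"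
    using psum_abs_summable[of s a] s0' s nn by simp
  have le: "a j * s ^ j \<le> s / s0 * (a j * s0 ^ j)" for j
  proof (cases j)
    case 0 thus ?thesis using a0 by simp
  next
    case (Suc i)
    have "s ^ i \<le> s0 ^ i" using s by (intro power_mono) auto
    hence "a j * s ^ j \<le> a j * (s * s0 ^ i)" using nn[of j] s Suc
      by (intro mult_left_mono) (auto intro: mult_left_mono)
    also have "\<dots> = s / s0 * (a j * s0 ^ j)" using Suc s by (simp add: field_simps)
    finally show ?thesis .
  qed
  have "psum a s = (\<Sum>j. a j * s ^ j)" by (simp add: psum_def)
  also have "\<dots> \<le> (\<Sum>j. s / s0 * (a j * s0 ^ j))"
    by (rule suminf_le[OF le sm summable_mult[OF sm0]])
  also have "\<dots> = s / s0 * psum a s0" by (simp add: psum_def suminf_mult[OF sm0] del: times_divide_eq_left)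
  finally show ?thesis .
qed



lemma core:
  fixes q :: nat and p :: "nat \<Rightarrow> nat \<Rightarrow> real" and r :: "nat \<Rightarrow> real" and z :: complex
  assumes nonneg: "\<And>i j. i \<le> q \<Longrightarrow> p i j \<ge> 0"
    and const0: "\<And>i. i \<le> q \<Longrightarrow> p i 0 = 0"
    and rpos: "\<And>j. j < q \<Longrightarrow> r (Suc j) > 0"
    and rsmall: "\<And>j. j < q \<Longrightarrow> ereal (1 / r (Suc j)) < conv_radius (p (Suc j))"
    and sR: "ereal (cmod z * (\<Prod>j<q. r (Suc j))) < conv_radius (p 0)"
    and theta: "psum (p 0) (cmod z * (\<Prod>j<q. r (Suc j))) * (\<Prod>j<q. psum (p (Suc j)) (1 / r (Suc j))) < 1"
  shows "(\<lambda>n. of_real (\<Sum>k\<le>n. \<Prod>i<Suc q. Acoef (p i) k n) * z ^ n) sums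
     (iter_circle_integral (map r [1..<Suc q])
         (\<lambda>ts. 1 / (1 - pser (p 0) (z * prod_list ts) * (\<Prod>j<q. pser (p (Suc j)) (1 / ts ! j)))
               * (\<Prod>j<q. 1 / ts ! j))
       / (2 * pi * \<i>) ^ q)"
proof -
  define rs where "rs = map r [1..<Suc q]"
  have len: "length rs = q" by (simp add: rs_def)
  have rs_nth: "rs ! j = r (Suc j)" if "j < q" for j
  proof -
    have "j < Suc q - 1" using that by simp
    from nth_map_upt[OF this, of r] show ?thesis by (simp add: rs_def del: upt_Suc)
  qed
  have pos: "\<forall>x\<in>set rs. x > 0"
  proof
    fix x assume "x \<in> set rs"
    then obtain j where "j < q" "x = rs ! j" using len by (auto simp: in_set_conv_nth)
    thus "x > 0" using rs_nth rpos by simp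
  qed
  define \<rho> where "\<rho> = (\<Prod>j<q. r (Suc j))"
  define M where "M j = psum (p (Suc j)) (1 / r (Suc j))" for j
  define C where "C = (\<Prod>j<q. M j)"
  define s where "s = cmod z * \<rho>"
  define \<theta> where "\<theta> = psum (p 0) s * C"
  have \<rho>pos: "\<rho> > 0" unfolding \<rho>_def by (intro prod_pos) (use rpos in auto)
  have Mnn: "M j \<ge> 0" if "j < q" for j
    unfolding M_def by (rule psum_nonneg) (use nonneg that rpos rsmall in \<open>auto simp: less_imp_le\<close>)
  have Cnn: "C \<ge> 0" unfolding C_def by (intro prod_nonneg) (use Mnn in auto)
  have snn: "s \<ge> 0" using \<rho>pos by (simp add: s_def)
  have sR': "ereal s < conv_radius (p 0)" using sR by (simp add: s_def \<rho>_def)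
  have P0nn: "psum (p 0) s \<ge> 0" by (rule psum_nonneg) (use nonneg snn sR' in auto)
  have \<theta>nn: "\<theta> \<ge> 0" using P0nn Cnn by (simp add: \<theta>_def)
  have \<theta>1: "\<theta> < 1" using theta by (simp add: \<theta>_def s_def \<rho>_def C_def M_def)
  have tor_len: "length ts = q" if "ts \<in> torus rs" for ts using that len by (simp add: torus_def)
  have tor_nth: "cmod (ts ! j) = r (Suc j)" if "ts \<in> torus rs" "j < q" for ts j
    using that len rs_nth by (simp add: torus_def)
  have tnz: "ts ! j \<noteq> 0" if "ts \<in> torus rs" "j < q" for ts j
    using tor_nth[OF that] rpos[OF that(2)] by auto
  have prodT: "prod_list ts = (\<Prod>j<q. ts ! j)" if "ts \<in> torus rs" for ts
    using tor_len[OF that] by (simp add: prod.list_conv_set_nth atLeast0LessThan)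
  have normT: "cmod (z * prod_list ts) = s" if "ts \<in> torus rs" for ts
  proof -
    have "cmod (prod_list ts) = (\<Prod>j<q. cmod (ts ! j))" by (simp add: prodT[OF that] prod_norm)
    also have "\<dots> = \<rho>" unfolding \<rho>_def by (intro prod.cong refl) (simp add: tor_nth[OF that])
    finally show ?thesis by (simp add: s_def norm_mult)
  qed
  have nP0: "cmod (pser (p 0) (z * prod_list ts)) \<le> psum (p 0) s" if "ts \<in> torus rs" for ts
    using psum_norm_le[of "p 0" "z * prod_list ts"] nonneg[of 0] sR' normT[OF that]
    by (simp add: pser_psum)
  define Q where "Q ts = (\<Prod>j<q. pser (p (Suc j)) (1 / ts ! j))" for ts
  define Pv where "Pv ts = (\<Prod>j<q. 1 / ts ! j :: complex)" for ts
  have rinv: "ereal (norm (1 / ts ! j)) < conv_radius (p (Suc j))" "norm (1 / ts ! j) = 1 / r (Suc j)"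
    if "ts \<in> torus rs" "j < q" for ts j
    using rsmall[OF that(2)] tor_nth[OF that] by (simp_all add: norm_divide)
  have nPj: "cmod (pser (p (Suc j)) (1 / ts ! j)) \<le> M j" if "ts \<in> torus rs" "j < q" for ts j
    using psum_norm_le[of "p (Suc j)" "1 / ts ! j"] nonneg[of "Suc j"] rinv[OF that] that(2)
    by (simp add: pser_psum M_def)
  have nQ: "cmod (Q ts) \<le> C" if "ts \<in> torus rs" for ts
  proof -
    have "cmod (Q ts) = (\<Prod>j<q. cmod (pser (p (Suc j)) (1 / ts ! j)))" by (simp add: Q_def prod_norm)
    also have "\<dots> \<le> C" unfolding C_def by (intro prod_mono) (use nPj[OF that] in auto)
    finally show ?thesis .
  qed
  have nPv: "cmod (Pv ts) = 1 / \<rho>" if "ts \<in> torus rs" for ts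
  proof -
    have "cmod (Pv ts) = (\<Prod>j<q. 1 / r (Suc j))"
      unfolding Pv_def prod_norm[symmetric] by (intro prod.cong refl) (simp add: norm_divide tor_nth[OF that])
    also have "\<dots> = 1 / \<rho>" by (simp add: \<rho>_def prod_dividef)
    finally show ?thesis .
  qed
  have nX: "cmod (pser (p 0) (z * prod_list ts) * Q ts) \<le> \<theta>" if "ts \<in> torus rs" for ts
    unfolding \<theta>_def norm_mult by (intro mult_mono nP0 nQ that) (use P0nn in auto)
  define E where "E k ts = (pser (p 0) (z * prod_list ts) * Q ts) ^ k * Pv ts" for k ts
  define cc where "cc k n = (\<Prod>i<Suc q. Acoef (p i) k n)" for k n
  have stage2: "good rs (E k) \<and>
      (\<lambda>n. (2*pi*\<i>)^q * (of_real (cc k n) * z^n)) sums iter_circle_integral rs (E k)" for k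
  proof -
    define g where "g n j t = t^n * pser (p (Suc j)) (1/t) ^ k * (1/t)" for n j and t :: complex
    define H where "H n ts = of_real (Acoef (p 0) k n) * z^n * (\<Prod>j<q. g n j (ts!j))" for n ts
    have contg: "continuous_on (sphere 0 (rs!j)) (g n j)" if "j < q" for n j
    proof -
      have rj: "rs ! j = r (Suc j)" "r (Suc j) > 0" using rs_nth rpos that by auto
      have c1: "continuous_on (cball 0 (1 / r (Suc j))) (psum (p (Suc j)) :: complex \<Rightarrow> complex)"
        by (rule psum_continuous) (use rsmall that in auto)
      have c2: "continuous_on (sphere 0 (r (Suc j))) (\<lambda>t::complex. 1 / t)"
        by (intro continuous_intros) (use rj in auto)
      have im: "(\<lambda>t::complex. 1 / t) ` sphere 0 (r (Suc j)) \<subseteq> cball 0 (1 / r (Suc j))"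
        using rj by (auto simp: norm_divide)
      have "continuous_on (sphere 0 (r (Suc j))) (\<lambda>t::complex. psum (p (Suc j)) (1 / t))"
        by (rule continuous_on_compose2[OF c1 c2 im])
      hence "continuous_on (sphere 0 (r (Suc j))) (\<lambda>t::complex. t^n * psum (p (Suc j)) (1/t) ^ k * (1/t))"
        by (intro continuous_intros) (use rj in auto)
      thus ?thesis using rj by (simp add: g_def[abs_def] pser_psum[abs_def])
    qed
    have intg: "contour_integral (circlepath 0 (rs!j)) (g n j) = 2*pi*\<i> * of_real (Acoef (p (Suc j)) k n)"
      if "j < q" for n j
    proof -
      have rj: "rs ! j = r (Suc j)" "r (Suc j) > 0" using rs_nth rpos that by auto
      define c where "c l = (of_real (Acoef (p (Suc j)) k l) :: complex)" for l
      have w: "ereal (norm (of_real (1 / r (Suc j)) :: complex)) < conv_radius (p (Suc j))"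
        using rsmall[OF that] rj by (simp add: norm_divide)
      have "summable (\<lambda>l. norm (of_real (Acoef (p (Suc j)) k l) * (of_real (1 / r (Suc j)) :: complex) ^ l))"
        using psum_pow[of "p (Suc j)", OF nonneg const0 w] that by auto
      hence sm: "summable (\<lambda>l. norm (c l) * (1 / r (Suc j)) ^ l)"
        using rj by (simp add: c_def norm_mult norm_power norm_divide)
      have eq: "g n j t = t^n * (\<Sum>l. c l * (1/t)^l) * (1/t)" if "t \<in> path_image (circlepath 0 (r (Suc j)))" for t
      proof -
        have "norm t = r (Suc j)" using that rj by (simp add: path_image_circ)
        hence w': "ereal (norm (1 / t)) < conv_radius (p (Suc j))"
          using rsmall[OF \<open>j < q\<close>] by (simp add: norm_divide)
        have "(\<lambda>l. c l * (1/t)^l) sums (psum (p (Suc j)) (1/t) ^ k)"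
          using psum_pow[of "p (Suc j)", OF nonneg const0 w'] \<open>j < q\<close> by (auto simp: c_def)
        thus ?thesis by (simp add: g_def pser_psum sums_iff)
      qed
      have "contour_integral (circlepath 0 (rs!j)) (g n j) =
            contour_integral (circlepath 0 (r (Suc j))) (\<lambda>t. t^n * (\<Sum>l. c l * (1/t)^l) * (1/t))"
        using rj(1) by (intro contour_integral_cong) (auto simp: eq)
      also have "\<dots> = 2*pi*\<i> * c n" by (rule coef_extract[OF rj(2) sm])
      finally show ?thesis by (simp add: c_def)
    qed
    have Hsep: "good rs (H n) \<and> iter_circle_integral rs (H n) = (2*pi*\<i>)^q * (of_real (cc k n) * z^n)" for n
    proof -
      have sep: "good rs (\<lambda>ts. \<Prod>j<length rs. g n j (ts!j)) \<and>
          iter_circle_integral rs (\<lambda>ts. \<Prod>j<length rs. g n j (ts!j)) =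
          (\<Prod>j<length rs. contour_integral (circlepath 0 (rs!j)) (g n j))"
        by (rule iter_sep[OF pos]) (use contg len in auto)
      have "(\<Prod>j<length rs. contour_integral (circlepath 0 (rs!j)) (g n j)) =
            (\<Prod>j<q. 2*pi*\<i> * of_real (Acoef (p (Suc j)) k n))"
        using len intg by (intro prod.cong) auto
      also have "\<dots> = (2*pi*\<i>)^q * of_real (\<Prod>j<q. Acoef (p (Suc j)) k n)"
        by (simp add: prod.distrib)
      finally have v: "iter_circle_integral rs (\<lambda>ts. \<Prod>j<q. g n j (ts!j)) =
          (2*pi*\<i>)^q * of_real (\<Prod>j<q. Acoef (p (Suc j)) k n)" using sep len by simp
      have gd: "good rs (\<lambda>ts. \<Prod>j<q. g n j (ts!j))" using sep len by simp
      have "good rs (H n) \<and> iter_circle_integral rs (H n) =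
           (of_real (Acoef (p 0) k n) * z^n) * iter_circle_integral rs (\<lambda>ts. \<Prod>j<q. g n j (ts!j))"
        unfolding H_def[abs_def] by (rule iter_scale[OF pos gd])
      moreover have "cc k n = Acoef (p 0) k n * (\<Prod>j<q. Acoef (p (Suc j)) k n)"
        by (simp only: cc_def prod.lessThan_Suc_shift)
      ultimately show ?thesis using v by (simp add: algebra_simps)
    qed
    have Hform: "H n ts = of_real (Acoef (p 0) k n) * (z * prod_list ts)^n * Q ts ^ k * Pv ts"
      if "ts \<in> torus rs" for n ts
    proof -
      have "(\<Prod>j<q. g n j (ts!j)) = (\<Prod>j<q. ts!j)^n * (\<Prod>j<q. pser (p (Suc j)) (1/ts!j))^k * (\<Prod>j<q. 1/ts!j)"
        by (simp only: g_def prod.distrib prod_power_distrib)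
      thus ?thesis by (simp add: H_def prodT[OF that] Q_def Pv_def power_mult_distrib)
    qed
    have Eform: "E k ts = pser (p 0) (z * prod_list ts) ^ k * Q ts ^ k * Pv ts" for ts
      by (simp add: E_def power_mult_distrib)
    have sA0: "summable (\<lambda>n. Acoef (p 0) k n * s^n)"
      using psum_real_sums[of "p 0", OF nonneg const0 snn sR'] by (auto simp: sums_iff)
    define A0s where "A0s = (\<Sum>n. Acoef (p 0) k n * s^n)"
    have psle: "(\<Sum>n<N. Acoef (p 0) k n * s^n) \<le> A0s" for N
      unfolding A0s_def by (rule sum_le_suminf[OF sA0]) (use snn Acoef_nonneg[of "p 0", OF nonneg] in auto)
    have ser: "(\<lambda>n. of_real (Acoef (p 0) k n) * (z * prod_list ts)^n) sums (pser (p 0) (z * prod_list ts) ^ k)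
       \<and> summable (\<lambda>n. norm (of_real (Acoef (p 0) k n) * (z * prod_list ts)^n))"
      if "ts \<in> torus rs" for ts
      using psum_pow[of "p 0", OF nonneg const0, of "z * prod_list ts" k] normT[OF that] sR'
      by (simp add: pser_psum)
    have nser: "norm (of_real (Acoef (p 0) k n) * (z * prod_list ts)^n) = Acoef (p 0) k n * s^n"
      if "ts \<in> torus rs" for ts n
      using normT[OF that] Acoef_nonneg[of "p 0" k n, OF nonneg] by (simp add: norm_mult norm_power)
    have unif: "\<exists>N0. \<forall>N\<ge>N0. \<forall>ts\<in>torus rs. cmod ((\<Sum>n<N. H n ts) - E k ts) \<le> e" if e: "e > 0" for e
    proof -
      define K where "K = C^k * (1/\<rho>)"
      have K: "K \<ge> 0" using Cnn \<rho>pos by (simp add: K_def)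
      obtain N0 where N0: "\<forall>N\<ge>N0. A0s - (\<Sum>n<N. Acoef (p 0) k n * s^n) \<le> e / (K + 1)"
        using tail_small[OF sA0, of "e / (K+1)"] e K unfolding A0s_def by auto
      have "cmod ((\<Sum>n<N. H n ts) - E k ts) \<le> e" if "N \<ge> N0" "ts \<in> torus rs" for N ts
      proof -
        define w where "w = z * prod_list ts"
        have "(\<Sum>n<N. H n ts) - E k ts =
            ((\<Sum>n<N. of_real (Acoef (p 0) k n) * w^n) - pser (p 0) w ^ k) * (Q ts ^ k * Pv ts)"
        proof -
          have s1: "(\<Sum>n<N. H n ts) = (\<Sum>n<N. of_real (Acoef (p 0) k n) * w^n) * (Q ts ^ k * Pv ts)"
            unfolding sum_distrib_right by (intro sum.cong refl) (simp add: Hform[OF that(2)] w_def mult.assoc)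
          have s2: "E k ts = pser (p 0) w ^ k * (Q ts ^ k * Pv ts)" by (simp add: Eform w_def mult.assoc)
          show ?thesis by (simp only: s1 s2 left_diff_distrib)
        qed
        also have "cmod \<dots> = cmod (pser (p 0) w ^ k - (\<Sum>n<N. of_real (Acoef (p 0) k n) * w^n)) *
            (cmod (Q ts) ^ k * cmod (Pv ts))"
          by (simp add: norm_mult norm_power norm_minus_commute)
        also have "\<dots> \<le> (A0s - (\<Sum>n<N. Acoef (p 0) k n * s^n)) * K"
        proof (rule mult_mono)
          have sw: "(\<lambda>n. of_real (Acoef (p 0) k n) * w^n) sums (pser (p 0) w ^ k)"
            and nw: "summable (\<lambda>n. norm (of_real (Acoef (p 0) k n) * w^n))"
            using ser[OF that(2)] by (simp_all add: w_def)
          have "cmod (pser (p 0) w ^ k - (\<Sum>n<N. of_real (Acoef (p 0) k n) * w^n)) \<le>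
              (\<Sum>n. norm (of_real (Acoef (p 0) k n) * w^n)) - (\<Sum>n<N. norm (of_real (Acoef (p 0) k n) * w^n))"
            using tail_bound[OF nw, of N] sw by (simp add: sums_iff)
          also have "\<dots> = A0s - (\<Sum>n<N. Acoef (p 0) k n * s^n)"
            using nser[OF that(2)] by (simp add: A0s_def w_def)
          finally show "cmod (pser (p 0) w ^ k - (\<Sum>n<N. of_real (Acoef (p 0) k n) * w^n)) \<le> A0s - (\<Sum>n<N. Acoef (p 0) k n * s^n)" .
          show "cmod (Q ts) ^ k * cmod (Pv ts) \<le> K"
            unfolding K_def nPv[OF that(2)] using nQ[OF that(2)] \<rho>pos
            by (intro mult_right_mono power_mono) auto
        qed (use K psle in auto)
        also have "\<dots> \<le> e / (K + 1) * K" using N0 that(1) K by (intro mult_right_mono) auto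
        also have "\<dots> \<le> e" using K e by (simp add: field_simps)
        finally show ?thesis .
      qed
      thus ?thesis by blast
    qed
    have gS: "good rs (\<lambda>ts. \<Sum>n<N. H n ts) \<and>
        iter_circle_integral rs (\<lambda>ts. \<Sum>n<N. H n ts) = (\<Sum>n<N. iter_circle_integral rs (H n))" for N
      by (rule iter_sum[OF pos]) (use Hsep in auto)
    have lim: "good rs (E k) \<and> (\<lambda>N. iter_circle_integral rs (\<lambda>ts. \<Sum>n<N. H n ts)) \<longlonglongrightarrow> iter_circle_integral rs (E k)"
      by (rule iter_limit[OF pos]) (use gS unif in auto)
    have "(\<lambda>N. iter_circle_integral rs (\<lambda>ts. \<Sum>n<N. H n ts)) = (\<lambda>N. \<Sum>n<N. (2*pi*\<i>)^q * (of_real (cc k n) * z^n))"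
      using gS Hsep by simp
    with lim show ?thesis by (simp add: sums_def)
  qed
  define I where "I ts = 1 / (1 - pser (p 0) (z * prod_list ts) * Q ts) * Pv ts" for ts
  have stage1: "(\<lambda>k. iter_circle_integral rs (E k)) sums iter_circle_integral rs I"
  proof -
    have gS: "good rs (\<lambda>ts. \<Sum>k<K. E k ts) \<and>
        iter_circle_integral rs (\<lambda>ts. \<Sum>k<K. E k ts) = (\<Sum>k<K. iter_circle_integral rs (E k))" for K
      by (rule iter_sum[OF pos]) (use stage2 in auto)
    have unif: "\<exists>K0. \<forall>K\<ge>K0. \<forall>ts\<in>torus rs. cmod ((\<Sum>k<K. E k ts) - I ts) \<le> e" if e: "e > 0" for e
    proof -
      have "(\<lambda>K. \<theta> ^ K) \<longlonglongrightarrow> 0" by (rule LIMSEQ_power_zero) (use \<theta>nn \<theta>1 in simp)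
      moreover have "e * (1 - \<theta>) * \<rho> > 0" using e \<theta>1 \<rho>pos by simp
      ultimately obtain K0 where K0: "\<forall>K\<ge>K0. norm (\<theta> ^ K - 0) < e * (1 - \<theta>) * \<rho>"
        using LIMSEQ_D by blast
      have "cmod ((\<Sum>k<K. E k ts) - I ts) \<le> e" if "K \<ge> K0" "ts \<in> torus rs" for K ts
      proof -
        define X where "X = pser (p 0) (z * prod_list ts) * Q ts"
        have nX': "cmod X \<le> \<theta>" using nX[OF that(2)] by (simp add: X_def)
        have X1: "X \<noteq> 1" using nX' \<theta>1 by auto
        have d: "cmod (1 - X) \<ge> 1 - \<theta>" using nX' norm_triangle_ineq2[of 1 X] by simp
        have d0: "1 - \<theta> > 0" using \<theta>1 by simp
        have "(\<Sum>k<K. E k ts) = (\<Sum>k<K. X ^ k) * Pv ts" by (simp add: E_def X_def sum_distrib_right)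
        also have "\<dots> = (1 - X ^ K) / (1 - X) * Pv ts" by (simp add: sum_gp_strict X1)
        finally have sE: "(\<Sum>k<K. E k ts) = (1 - X ^ K) / (1 - X) * Pv ts" .
        have Ieq: "I ts = 1 / (1 - X) * Pv ts" by (simp add: I_def X_def)
        have X1': "1 - X \<noteq> 0" using X1 by simp
        have "(1 - X ^ K) / (1 - X) * Pv ts - 1 / (1 - X) * Pv ts = ((1 - X ^ K) - 1) / (1 - X) * Pv ts"
          by (simp only: diff_divide_distrib left_diff_distrib)
        also have "\<dots> = - (X ^ K / (1 - X) * Pv ts)" by simp
        finally have "(1 - X ^ K) / (1 - X) * Pv ts - 1 / (1 - X) * Pv ts = - (X ^ K / (1 - X) * Pv ts)" .
        hence "(\<Sum>k<K. E k ts) - I ts = - (X ^ K / (1 - X) * Pv ts)" by (simp only: sE Ieq)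
        hence "cmod ((\<Sum>k<K. E k ts) - I ts) = cmod X ^ K / cmod (1 - X) * (1 / \<rho>)"
          by (simp add: norm_mult norm_divide norm_power nPv[OF that(2)])
        also have "\<dots> \<le> \<theta> ^ K / (1 - \<theta>) * (1 / \<rho>)"
          using nX' d d0 \<rho>pos \<theta>nn by (intro mult_right_mono frac_le power_mono) auto
        also have "\<dots> \<le> e"
        proof -
          have "\<theta> ^ K < e * (1 - \<theta>) * \<rho>" using K0 that(1) \<theta>nn by simp
          thus ?thesis using d0 \<rho>pos by (simp add: field_simps)
        qed
        finally show ?thesis .
      qed
      thus ?thesis by blast
    qed
    have lim: "good rs I \<and> (\<lambda>K. iter_circle_integral rs (\<lambda>ts. \<Sum>k<K. E k ts)) \<longlonglongrightarrow> iter_circle_integral rs I"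
      by (rule iter_limit[OF pos]) (use gS unif in auto)
    thus ?thesis using gS by (simp add: sums_def)
  qed
  define u where "u k n = of_real (cc k n) * z ^ n" for k n
  define v where "v k n = Acoef (p 0) k n * s ^ n * C ^ k" for k n
  have ccnn: "cc k n \<ge> 0" for k n
    unfolding cc_def by (intro prod_nonneg) (use Acoef_nonneg nonneg in auto)
  have uzero: "u k n = 0" if "n < k" for k n
  proof -
    have "cc k n = Acoef (p 0) k n * (\<Prod>j<q. Acoef (p (Suc j)) k n)"
      by (simp only: cc_def prod.lessThan_Suc_shift)
    thus ?thesis using Acoef_empty[OF that, of "p 0"] by (simp add: u_def)
  qed
  have Aj_le: "Acoef (p (Suc j)) k n \<le> M j ^ k * r (Suc j) ^ n" if "j < q" for j k n
  proof -
    have rj: "r (Suc j) > 0" using rpos that .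
    have "Acoef (p (Suc j)) k n * (1 / r (Suc j)) ^ n \<le> M j ^ k"
      unfolding M_def by (rule Acoef_le) (use nonneg const0 that rsmall rj in auto)
    hence "Acoef (p (Suc j)) k n * (1 / r (Suc j)) ^ n * r (Suc j) ^ n \<le> M j ^ k * r (Suc j) ^ n"
      using rj by (intro mult_right_mono) auto
    thus ?thesis using rj by (simp add: power_one_over field_simps)
  qed
  have ubound: "norm (u k n) \<le> v k n" for k n
  proof -
    have "(\<Prod>j<q. Acoef (p (Suc j)) k n) \<le> (\<Prod>j<q. M j ^ k * r (Suc j) ^ n)"
      by (intro prod_mono) (use Aj_le Acoef_nonneg nonneg in auto)
    also have "\<dots> = C ^ k * \<rho> ^ n" by (simp add: C_def \<rho>_def prod.distrib prod_power_distrib)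
    finally have pj: "(\<Prod>j<q. Acoef (p (Suc j)) k n) \<le> C ^ k * \<rho> ^ n" .
    have "norm (u k n) = cc k n * cmod z ^ n" using ccnn by (simp add: u_def norm_mult norm_power)
    also have "cc k n = Acoef (p 0) k n * (\<Prod>j<q. Acoef (p (Suc j)) k n)"
      by (simp only: cc_def prod.lessThan_Suc_shift)
    also have "Acoef (p 0) k n * (\<Prod>j<q. Acoef (p (Suc j)) k n) * cmod z ^ n \<le>
        Acoef (p 0) k n * (C ^ k * \<rho> ^ n) * cmod z ^ n"
      using pj Acoef_nonneg[of "p 0" k n, OF nonneg] by (intro mult_right_mono mult_left_mono) auto
    also have "\<dots> = v k n" by (simp add: v_def s_def power_mult_distrib)
    finally show ?thesis .
  qed
  have sA0k: "(\<lambda>n. Acoef (p 0) k n * s^n) sums (psum (p 0) s ^ k)" for k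
    by (rule psum_real_sums[of "p 0", OF nonneg const0 snn sR']) auto
  have sv: "(v k) sums (\<theta> ^ k)" for k
    using sums_mult2[OF sA0k[of k], of "C ^ k"] by (simp add: v_def[abs_def] \<theta>_def power_mult_distrib)
  have sV: "summable (\<lambda>k. suminf (v k))"
    using sv summable_geometric[of \<theta>] \<theta>nn \<theta>1 by (simp add: sums_iff)
  have sw: "(\<lambda>n. \<Sum>k\<le>n. u k n) sums (\<Sum>k. \<Sum>n. u k n)"
    by (rule swap_series[OF uzero ubound]) (use sv sV in \<open>auto simp: sums_iff\<close>)
  have pi0: "(2*pi*\<i>)^q \<noteq> (0::complex)" by simp
  have inner: "(\<Sum>n. u k n) = iter_circle_integral rs (E k) / (2*pi*\<i>)^q" for k
  proof -
    have "(\<lambda>n. (2*pi*\<i>)^q * u k n / (2*pi*\<i>)^q) sums (iter_circle_integral rs (E k) / (2*pi*\<i>)^q)"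
      using sums_divide[OF conjunct2[OF stage2[of k]], of "(2*pi*\<i>)^q"] by (simp add: u_def)
    moreover have "(\<lambda>n. (2*pi*\<i>)^q * u k n / (2*pi*\<i>)^q) = (\<lambda>n. u k n)" using pi0 by simp
    ultimately show ?thesis by (simp add: sums_iff)
  qed
  have L: "(\<Sum>k. \<Sum>n. u k n) = iter_circle_integral rs I / (2*pi*\<i>)^q"
    unfolding inner using sums_divide[OF stage1, of "(2*pi*\<i>)^q"] by (simp add: sums_iff)
  have R: "(\<lambda>n. \<Sum>k\<le>n. u k n) = (\<lambda>n. of_real (\<Sum>k\<le>n. \<Prod>i<Suc q. Acoef (p i) k n) * z ^ n)"
    by (rule ext) (simp add: u_def cc_def sum_distrib_right)
  have Ieq: "I = (\<lambda>ts. 1 / (1 - pser (p 0) (z * prod_list ts) * (\<Prod>j<q. pser (p (Suc j)) (1 / ts ! j)))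
               * (\<Prod>j<q. 1 / ts ! j))"
    by (rule ext) (simp only: I_def Q_def Pv_def)
  show ?thesis using sw unfolding L R rs_def Ieq .
qed



theorem proposition2:
  fixes m :: nat and p :: "nat \<Rightarrow> nat \<Rightarrow> real" and r :: "nat \<Rightarrow> real"
  assumes m2: "m \<ge> 2"
    and nonneg: "\<And>i j. i < m \<Longrightarrow> p i j \<ge> 0"
    and const0: "\<And>i. i < m \<Longrightarrow> p i 0 = 0"
    and radius: "\<And>i. i < m \<Longrightarrow> conv_radius (p i) > 0"
    and rpos: "\<And>i. 1 \<le> i \<Longrightarrow> i < m \<Longrightarrow> r i > 0"
    and rsmall: "\<And>i. 1 \<le> i \<Longrightarrow> i < m \<Longrightarrow> ereal (1 / r i) < conv_radius (p i)"
  shows "\<exists>\<delta>>0. \<forall>z::complex. norm z < \<delta> \<longrightarrow>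
     summable (\<lambda>n. complex_of_real (Dcoeff m p n) * z ^ n) \<and>
     (\<Sum>n. complex_of_real (Dcoeff m p n) * z ^ n) =
       iter_circle_integral (map r [1..<m])
         (\<lambda>ts. 1 / (1 - pser (p 0) (z * prod_list ts) *
                         (\<Prod>j<m - 1. pser (p (Suc j)) (1 / ts ! j)))
               * (\<Prod>j<m - 1. 1 / ts ! j))
       / (2 * pi * \<i>) ^ (m - 1)"
proof -
  define q where "q = m - 1"
  have mq: "m = Suc q" using m2 by (simp add: q_def)
  have nonneg': "\<And>i j. i \<le> q \<Longrightarrow> p i j \<ge> 0" using nonneg mq by simp
  have const0': "\<And>i. i \<le> q \<Longrightarrow> p i 0 = 0" using const0 mq by simp
  have rpos': "\<And>j. j < q \<Longrightarrow> r (Suc j) > 0" using rpos mq by simp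
  have rsmall': "\<And>j. j < q \<Longrightarrow> ereal (1 / r (Suc j)) < conv_radius (p (Suc j))" using rsmall mq by simp
  define \<rho> where "\<rho> = (\<Prod>j<q. r (Suc j))"
  define C where "C = (\<Prod>j<q. psum (p (Suc j)) (1 / r (Suc j)))"
  have \<rho>pos: "\<rho> > 0" unfolding \<rho>_def by (intro prod_pos) (use rpos' in auto)
  have Cnn: "C \<ge> 0" unfolding C_def
    by (intro prod_nonneg ballI psum_nonneg) (use nonneg' rpos' rsmall' in \<open>auto simp: less_imp_le\<close>)
  obtain s0 where s0: "0 < s0" "ereal s0 < conv_radius (p 0)"
    using ereal_dense2[OF radius[of 0]] m2 by auto
  define F0 where "F0 = psum (p 0) s0"
  have F0nn: "F0 \<ge> 0" unfolding F0_def by (rule psum_nonneg) (use nonneg' s0 in auto)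
  define \<delta> where "\<delta> = s0 / (\<rho> * (2 * F0 * C + 1))"
  have D1: "2 * F0 * C + 1 > 0" using F0nn Cnn by (simp add: add_nonneg_pos)
  have \<delta>pos: "\<delta> > 0" using s0 \<rho>pos D1 by (simp add: \<delta>_def)
  show ?thesis
  proof (intro exI[of _ \<delta>] conjI allI impI)
    show "\<delta> > 0" by (rule \<delta>pos)
    fix z :: complex assume z: "norm z < \<delta>"
    define s where "s = cmod z * \<rho>"
    have snn: "s \<ge> 0" using \<rho>pos by (simp add: s_def)
    have ss0: "s < s0 / (2 * F0 * C + 1)"
    proof -
      have "cmod z < s0 / (\<rho> * (2 * F0 * C + 1))" using z by (simp add: \<delta>_def)
      hence "cmod z * (\<rho> * (2 * F0 * C + 1)) < s0"
        by (subst (asm) pos_less_divide_eq) (use \<rho>pos D1 in auto)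
      thus ?thesis unfolding s_def
        by (subst pos_less_divide_eq[OF D1]) (simp add: mult.assoc)
    qed
    have sle: "s \<le> s0"
    proof -
      have "s0 / (2 * F0 * C + 1) \<le> s0" using s0 D1 F0nn Cnn
        by (simp add: divide_le_eq)
      thus ?thesis using ss0 by simp
    qed
    have sR: "ereal s < conv_radius (p 0)"
      using sle s0(2) by (meson ereal_less_eq(3) order_le_less_trans)
    have "psum (p 0) s \<le> s / s0 * F0"
      unfolding F0_def by (rule psum_small) (use nonneg' const0' snn sle s0 in auto)
    hence "psum (p 0) s * C \<le> s / s0 * F0 * C" using Cnn by (intro mult_right_mono) auto
    also have "\<dots> < 1"
    proof -
      have "s / s0 < 1 / (2 * F0 * C + 1)" using ss0 s0 D1 by (simp add: field_simps)
      hence "s / s0 * (F0 * C) \<le> 1 / (2 * F0 * C + 1) * (F0 * C)"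
        using F0nn Cnn by (intro mult_right_mono) auto
      also have "\<dots> < 1" using D1 F0nn Cnn by (simp add: field_simps)
      finally show ?thesis by (simp add: mult.assoc)
    qed
    finally have th: "psum (p 0) s * C < 1" .
    have core': "(\<lambda>n. of_real (\<Sum>k\<le>n. \<Prod>i<Suc q. Acoef (p i) k n) * z ^ n) sums
     (iter_circle_integral (map r [1..<Suc q])
         (\<lambda>ts. 1 / (1 - pser (p 0) (z * prod_list ts) * (\<Prod>j<q. pser (p (Suc j)) (1 / ts ! j)))
               * (\<Prod>j<q. 1 / ts ! j))
       / (2 * pi * \<i>) ^ q)"
      by (rule core[of q p r z, OF nonneg' const0' rpos' rsmall']) (use sR th in \<open>simp_all add: s_def \<rho>_def C_def\<close>)
    have Deq: "Dcoeff m p n = (\<Sum>k\<le>n. \<Prod>i<Suc q. Acoef (p i) k n)" for n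
      using Dcoeff_eq[of m p n] mq by simp
    have sm: "(\<lambda>n. complex_of_real (Dcoeff m p n) * z ^ n) sums
     (iter_circle_integral (map r [1..<m])
         (\<lambda>ts. 1 / (1 - pser (p 0) (z * prod_list ts) * (\<Prod>j<m - 1. pser (p (Suc j)) (1 / ts ! j)))
               * (\<Prod>j<m - 1. 1 / ts ! j))
       / (2 * pi * \<i>) ^ (m - 1))"
      using core' unfolding Deq q_def[symmetric] mq[symmetric] .
    show "summable (\<lambda>n. complex_of_real (Dcoeff m p n) * z ^ n)" using sm by (rule sums_summable)
    show "(\<Sum>n. complex_of_real (Dcoeff m p n) * z ^ n) =
       iter_circle_integral (map r [1..<m])
         (\<lambda>ts. 1 / (1 - pser (p 0) (z * prod_list ts) *
                         (\<Prod>j<m - 1. pser (p (Suc j)) (1 / ts ! j)))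
               * (\<Prod>j<m - 1. 1 / ts ! j))
       / (2 * pi * \<i>) ^ (m - 1)" using sm by (rule sums_unique[symmetric])
  qed
qed

end
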